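(* Let $K$ be a commutative field and $q\in K$. Define a coproduct $\Delta'_q$ on $\mathcal{H}_{\mathcal{PP}}$ by, for every plane poset $P$, $$\Delta'_q(P)=\sum_{P_1P_2=P}q^{|P_1||P_2|}P_1\otimes P_2,$$ the sum running over pairs of plane posets $(P_1,P_2)$ (possibly empty) with $P_1P_2=P$. Then for all $x,y,z\in\mathcal{H}_{\mathcal{PP}}$, $\langle x\triangleleft y,z\rangle_q=\langle x\otimes y,\Delta'_q(z)\rangle_q$.
   Context: A plane poset is a finite set with two partial orders $\leq_h,\leq_r$ such that two distinct elements are $\leq_h$-comparable iff they are not $\leq_r$-comparable, considered up to isomorphism; $\mathcal{H}_{\mathcal{PP}}$ is the $K$-vector space with basis these isomorphism classes; $|P|$ is the cardinality. $PQ$ is the plane poset on $P\sqcup Q$ with $P,Q$ plane subposets, no $\leq_h$-comparability between $P$ and $Q$, and $x<_r y$ for $x\in P,y\in Q$; $P\triangleleft Q$ is the plane poset on $P\sqcup Q$ with $P,Q$ plane subposets, no $\leq_r$-comparability between $P$ and $Q$, and $x<_h y$ for $x\in P,y\in Q$; both extended bilinearly. On a plane poset, $x\leq y$ iff ($x\leq_h y$ or $x\leq_r y$) is a total order (known fact); for $P,Q$ of equal cardinality $\theta_{P,Q}$ is the increasing bijection $P\to Q$, and $P\leq Q$ means: $\theta_{P,Q}(x)\leq_h\theta_{P,Q}(y)$ in $Q$ implies $x\leq_h y$ in $P$. $\iota(P)=(P,\leq_r,\leq_h)$. The pairing: $\langle P,Q\rangle_q=q^{\phi(P,Q)}$ if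 $\iota(P)\leq Q$ and $0$ otherwise, extended bilinearly, with $\phi(P,Q)=\sharp\{(x,y)\in P^2\mid x<_r y,\ \theta_{P,Q}(x)<_h\theta_{P,Q}(y)\}+\sharp\{(x,y)\in P^2\mid x<_h y,\ \theta_{P,Q}(x)<_r\theta_{P,Q}(y)\}$ and $q^0=1$; $\langle a\otimes b,c\otimes d\rangle_q=\langle a,c\rangle_q\langle b,d\rangle_q$. *)

theory Defs
  imports Main "HOL-Library.Poly_Mapping"
begin

definition partial_order_rel :: "'a set \<Rightarrow> 'a rel \<Rightarrow> bool" where
  "partial_order_rel A R \<longleftrightarrow> R \<subseteq> A \<times> A \<and> (\<forall>x\<in>A. (x, x) \<in> R) \<and> trans R \<and> antisym R"

definition plane_poset :: "'a set \<Rightarrow> 'a rel \<Rightarrow> 'a rel \<Rightarrow> bool" where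
  "plane_poset A h r \<longleftrightarrow> finite A \<and> partial_order_rel A h \<and> partial_order_rel A r \<and>
     (\<forall>x\<in>A. \<forall>y\<in>A. x \<noteq> y \<longrightarrow>
        (((x, y) \<in> h \<or> (y, x) \<in> h) \<longleftrightarrow> \<not> ((x, y) \<in> r \<or> (y, x) \<in> r)))"

text \<open>Isomorphism classes of plane posets are represented by canonical representatives:
plane posets on {0..<n} whose total order (x \<le> y iff x \<le>_h y or x \<le>_r y) is the
natural order on nat. By the known fact that this relation is a total order, and since
isomorphisms preserve it, every isomorphism class contains exactly one canonical
representative.\<close>

definition canonical_pp :: "nat \<times> nat rel \<times> nat rel \<Rightarrow> bool" where
  "canonical_pp p = (case p of (n, h, r) \<Rightarrow>
     plane_poset {0..<n} h r \<and> (\<forall>i<n. \<forall>j<n. (i \<le> j \<longleftrightarrow> (i, j) \<in> h \<or> (i, j) \<in> r)))"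

typedef pp = "{p. canonical_pp p}"
proof
  show "(0, {}, {}) \<in> {p. canonical_pp p}"
    by (simp add: canonical_pp_def plane_poset_def partial_order_rel_def trans_def antisym_def)
qed

definition pp_size :: "pp \<Rightarrow> nat" where "pp_size P = fst (Rep_pp P)"
definition pp_h :: "pp \<Rightarrow> nat rel" where "pp_h P = fst (snd (Rep_pp P))"
definition pp_r :: "pp \<Rightarrow> nat rel" where "pp_r P = snd (snd (Rep_pp P))"

definition shift_rel :: "nat \<Rightarrow> nat rel \<Rightarrow> nat rel" where
  "shift_rel k R = (\<lambda>(i, j). (i + k, j + k)) ` R"

definition pp_concat :: "pp \<Rightarrow> pp \<Rightarrow> pp" where
  "pp_concat P Q = Abs_pp (pp_size P + pp_size Q,
      pp_h P \<union> shift_rel (pp_size P) (pp_h Q),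
      pp_r P \<union> shift_rel (pp_size P) (pp_r Q) \<union>
        {(i, pp_size P + j) | i j. i < pp_size P \<and> j < pp_size Q})"

definition pp_under :: "pp \<Rightarrow> pp \<Rightarrow> pp" where
  "pp_under P Q = Abs_pp (pp_size P + pp_size Q,
      pp_h P \<union> shift_rel (pp_size P) (pp_h Q) \<union>
        {(i, pp_size P + j) | i j. i < pp_size P \<and> j < pp_size Q},
      pp_r P \<union> shift_rel (pp_size P) (pp_r Q))"

text \<open>For canonical representatives of equal cardinality
the increasing bijection theta is the identity; iota(P) \<le> Q means:
theta(x) \<le>_h theta(y) in Q implies x \<le>_h y in iota(P), i.e. x \<le>_r y in P.
For different cardinalities the pairing is 0.\<close>

definition pp_leq_iota :: "pp \<Rightarrow> pp \<Rightarrow> bool" where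
  "pp_leq_iota P Q \<longleftrightarrow> pp_size P = pp_size Q \<and>
     (\<forall>x<pp_size P. \<forall>y<pp_size P. (x, y) \<in> pp_h Q \<longrightarrow> (x, y) \<in> pp_r P)"

definition pp_phi :: "pp \<Rightarrow> pp \<Rightarrow> nat" where
  "pp_phi P Q = card {(x, y). x \<noteq> y \<and> (x, y) \<in> pp_r P \<and> (x, y) \<in> pp_h Q}
              + card {(x, y). x \<noteq> y \<and> (x, y) \<in> pp_h P \<and> (x, y) \<in> pp_r Q}"

definition pp_pair :: "'k::field \<Rightarrow> pp \<Rightarrow> pp \<Rightarrow> 'k" where
  "pp_pair q P Q = (if pp_leq_iota P Q then q ^ pp_phi P Q else 0)"

type_synonym 'k hpp = "pp \<Rightarrow>\<^sub>0 'k"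
type_synonym 'k hpp2 = "(pp \<times> pp) \<Rightarrow>\<^sub>0 'k"

definition under :: "'k::field hpp \<Rightarrow> 'k hpp \<Rightarrow> 'k hpp" where
  "under x y = (\<Sum>a\<in>Poly_Mapping.keys x. \<Sum>b\<in>Poly_Mapping.keys y.
      Poly_Mapping.single (pp_under a b) (Poly_Mapping.lookup x a * Poly_Mapping.lookup y b))"

definition tensor :: "'k::field hpp \<Rightarrow> 'k hpp \<Rightarrow> 'k hpp2" where
  "tensor x y = (\<Sum>a\<in>Poly_Mapping.keys x. \<Sum>b\<in>Poly_Mapping.keys y.
      Poly_Mapping.single (a, b) (Poly_Mapping.lookup x a * Poly_Mapping.lookup y b))"

definition pairing :: "'k::field \<Rightarrow> 'k hpp \<Rightarrow> 'k hpp \<Rightarrow> 'k" where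
  "pairing q x z = (\<Sum>a\<in>Poly_Mapping.keys x. \<Sum>c\<in>Poly_Mapping.keys z. Poly_Mapping.lookup x a * Poly_Mapping.lookup z c * pp_pair q a c)"

definition pairing2 :: "'k::field \<Rightarrow> 'k hpp2 \<Rightarrow> 'k hpp2 \<Rightarrow> 'k" where
  "pairing2 q T U = (\<Sum>ab\<in>Poly_Mapping.keys T. \<Sum>cd\<in>Poly_Mapping.keys U.
      Poly_Mapping.lookup T ab * Poly_Mapping.lookup U cd * pp_pair q (fst ab) (fst cd) * pp_pair q (snd ab) (snd cd))"

definition coprod :: "'k::field \<Rightarrow> 'k hpp \<Rightarrow> 'k hpp2" where
  "coprod q z = (\<Sum>c\<in>Poly_Mapping.keys z. \<Sum>p\<in>{(P1, P2). pp_concat P1 P2 = c}.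
      Poly_Mapping.single p (Poly_Mapping.lookup z c * q ^ (pp_size (fst p) * pp_size (snd p))))"

end

theory Submission
  imports Defs
begin

lemma pp_canon: "canonical_pp (pp_size P, pp_h P, pp_r P)"
  using Rep_pp[of P] by (simp add: pp_size_def pp_h_def pp_r_def)

lemma pp_eqI:
  assumes "pp_size P = pp_size Q" "pp_h P = pp_h Q" "pp_r P = pp_r Q"
  shows "P = Q"
  using assms unfolding pp_size_def pp_h_def pp_r_def
  by (metis Rep_pp_inject prod.collapse)

lemma Rep_Abs_pp: "canonical_pp p \<Longrightarrow> Rep_pp (Abs_pp p) = p"
  by (simp add: Abs_pp_inverse)

lemma Abs_pp_fields:
  assumes "canonical_pp (n, h, r)"
  shows "pp_size (Abs_pp (n, h, r)) = n" "pp_h (Abs_pp (n, h, r)) = h" "pp_r (Abs_pp (n, h, r)) = r"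
  using Rep_Abs_pp[OF assms] by (simp_all add: pp_size_def pp_h_def pp_r_def)

lemma canon_props:
  assumes "canonical_pp (n, h, r)"
  shows "h \<subseteq> {0..<n} \<times> {0..<n}" "r \<subseteq> {0..<n} \<times> {0..<n}"
    "\<And>i j. (i, j) \<in> h \<Longrightarrow> i \<le> j" "\<And>i j. (i, j) \<in> r \<Longrightarrow> i \<le> j"
    "\<And>i j. i \<le> j \<Longrightarrow> j < n \<Longrightarrow> (i, j) \<in> h \<or> (i, j) \<in> r"
    "\<And>i j. i \<noteq> j \<Longrightarrow> (i, j) \<in> h \<Longrightarrow> (i, j) \<notin> r"
    "trans h" "trans r"
proof -
  have pp: "plane_poset {0..<n} h r" and tot: "\<forall>i<n. \<forall>j<n. (i \<le> j \<longleftrightarrow> (i, j) \<in> h \<or> (i, j) \<in> r)"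
    using assms by (auto simp: canonical_pp_def)
  show hs: "h \<subseteq> {0..<n} \<times> {0..<n}" and rs: "r \<subseteq> {0..<n} \<times> {0..<n}" "trans h" "trans r"
    using pp by (auto simp: plane_poset_def partial_order_rel_def)
  show "\<And>i j. (i, j) \<in> h \<Longrightarrow> i \<le> j"
  proof -
    fix i j assume a: "(i, j) \<in> h"
    then have "i < n" "j < n" using hs by auto
    then show "i \<le> j" using tot a by blast
  qed
  show "\<And>i j. (i, j) \<in> r \<Longrightarrow> i \<le> j"
  proof -
    fix i j assume a: "(i, j) \<in> r"
    then have "i < n" "j < n" using rs by auto
    then show "i \<le> j" using tot a by blast
  qed
  show "\<And>i j. i \<le> j \<Longrightarrow> j < n \<Longrightarrow> (i, j) \<in> h \<or> (i, j) \<in> r" using tot by (meson le_less_trans)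
  show "\<And>i j. i \<noteq> j \<Longrightarrow> (i, j) \<in> h \<Longrightarrow> (i, j) \<notin> r"
    using pp hs unfolding plane_poset_def by blast
qed

lemma canon_intro:
  assumes "h \<subseteq> {0..<n} \<times> {0..<n}" "r \<subseteq> {0..<n} \<times> {0..<n}"
    "\<And>i. i < n \<Longrightarrow> (i, i) \<in> h" "\<And>i. i < n \<Longrightarrow> (i, i) \<in> r"
    "\<And>i j. (i, j) \<in> h \<Longrightarrow> i \<le> j" "\<And>i j. (i, j) \<in> r \<Longrightarrow> i \<le> j"
    "\<And>i j. i \<le> j \<Longrightarrow> j < n \<Longrightarrow> (i, j) \<in> h \<or> (i, j) \<in> r"
    "\<And>i j. i \<noteq> j \<Longrightarrow> (i, j) \<in> h \<Longrightarrow> (i, j) \<notin> r"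
    "trans h" "trans r"
  shows "canonical_pp (n, h, r)"
proof -
  have ah: "antisym h" using assms(5) by (metis antisymI le_antisym)
  have ar: "antisym r" using assms(6) by (metis antisymI le_antisym)
  have plane: "\<forall>x\<in>{0..<n}. \<forall>y\<in>{0..<n}. x \<noteq> y \<longrightarrow>
        (((x, y) \<in> h \<or> (y, x) \<in> h) \<longleftrightarrow> \<not> ((x, y) \<in> r \<or> (y, x) \<in> r))"
  proof (intro ballI impI iffI)
    fix x y assume xy: "x \<in> {0..<n}" "y \<in> {0..<n}" "x \<noteq> y" "(x, y) \<in> h \<or> (y, x) \<in> h"
    then show "\<not> ((x, y) \<in> r \<or> (y, x) \<in> r)"
      using assms(5,6,8) by (metis le_antisym)
  next
    fix x y assume xy: "x \<in> {0..<n}" "y \<in> {0..<n}" "x \<noteq> y" "\<not> ((x, y) \<in> r \<or> (y, x) \<in> r)"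
    then show "(x, y) \<in> h \<or> (y, x) \<in> h"
      using assms(7)[of x y] assms(7)[of y x] by (cases "x \<le> y") auto
  qed
  show ?thesis
    unfolding canonical_pp_def plane_poset_def partial_order_rel_def
    using assms ah ar plane by (auto, blast+)
qed

lemma mem_shift_rel: "(a, b) \<in> shift_rel k R \<longleftrightarrow> k \<le> a \<and> k \<le> b \<and> (a - k, b - k) \<in> R"
  unfolding shift_rel_def by (auto simp: image_iff intro!: bexI[of _ "(a - k, b - k)"])

lemma mem_cross: "((a::nat), b) \<in> {(i, k + j) | i j. i < k \<and> j < m} \<longleftrightarrow> a < k \<and> k \<le> b \<and> b < k + m"
proof
  assume "a < k \<and> k \<le> b \<and> b < k + m"
  then show "(a, b) \<in> {(i, k + j) | i j. i < k \<and> j < m}"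
    by (intro CollectI exI[of _ a] exI[of _ "b - k"]) auto
qed auto

lemma canon_refl:
  assumes "canonical_pp (n, h, r)" "i < n"
  shows "(i, i) \<in> h" "(i, i) \<in> r"
  using assms by (auto simp: canonical_pp_def plane_poset_def partial_order_rel_def)

lemma trans_sum1:
  fixes R1 R2 :: "nat rel"
  assumes s1: "R1 \<subseteq> {0..<k} \<times> {0..<k}" and t1: "trans R1"
    and s2: "R2 \<subseteq> {0..<m} \<times> {0..<m}" and t2: "trans R2"
  shows "trans (R1 \<union> shift_rel k R2)"
proof (rule transI)
  fix x y z assume xy: "(x, y) \<in> R1 \<union> shift_rel k R2" and yz: "(y, z) \<in> R1 \<union> shift_rel k R2"
  from xy show "(x, z) \<in> R1 \<union> shift_rel k R2"
  proof
    assume a: "(x, y) \<in> R1"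
    then have "y < k" using s1 by auto
    from yz show ?thesis
    proof
      assume "(y, z) \<in> R1" then show ?thesis using a t1 by (meson transD UnI1)
    next
      assume "(y, z) \<in> shift_rel k R2" then show ?thesis using \<open>y < k\<close> by (simp add: mem_shift_rel)
    qed
  next
    assume b: "(x, y) \<in> shift_rel k R2"
    then have "k \<le> y" by (simp add: mem_shift_rel)
    from yz show ?thesis
    proof
      assume "(y, z) \<in> R1" then show ?thesis using \<open>k \<le> y\<close> s1 by auto
    next
      assume c: "(y, z) \<in> shift_rel k R2"
      then show ?thesis using b t2 by (simp add: mem_shift_rel) (meson transD)
    qed
  qed
qed

lemma trans_sum2:
  fixes R1 R2 :: "nat rel"
  assumes s1: "R1 \<subseteq> {0..<k} \<times> {0..<k}" and t1: "trans R1"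
    and s2: "R2 \<subseteq> {0..<m} \<times> {0..<m}" and t2: "trans R2"
  shows "trans (R1 \<union> shift_rel k R2 \<union> {(i, k + j) | i j. i < k \<and> j < m})"
proof (rule transI)
  let ?C = "{(i, k + j) | i j. i < k \<and> j < m}"
  have tr: "trans (R1 \<union> shift_rel k R2)" using assms by (rule trans_sum1)
  fix x y z assume xy: "(x, y) \<in> R1 \<union> shift_rel k R2 \<union> ?C" and yz: "(y, z) \<in> R1 \<union> shift_rel k R2 \<union> ?C"
  have xy': "(x, y) \<in> R1 \<or> (x, y) \<in> shift_rel k R2 \<or> (x < k \<and> k \<le> y \<and> y < k + m)"
    using xy mem_cross[of x y k m] by blast
  have yz': "(y, z) \<in> R1 \<or> (y, z) \<in> shift_rel k R2 \<or> (y < k \<and> k \<le> z \<and> z < k + m)"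
    using yz mem_cross[of y z k m] by blast
  have "(x, z) \<in> R1 \<union> shift_rel k R2 \<or> (x < k \<and> k \<le> z \<and> z < k + m)"
  proof (cases "(x, y) \<in> R1 \<union> shift_rel k R2 \<and> (y, z) \<in> R1 \<union> shift_rel k R2")
    case True then show ?thesis using tr by (meson transD)
  next
    case False
    then consider "x < k \<and> k \<le> y \<and> y < k + m" | "y < k \<and> k \<le> z \<and> z < k + m" using xy' yz' by blast
    then show ?thesis
    proof cases
      case 1
      then have "(y, z) \<in> shift_rel k R2" using yz' s1 by auto
      then have "k \<le> z" "z - k < m" using s2 by (auto simp: mem_shift_rel)
      then show ?thesis using 1 by auto
    next
      case 2
      then have "(x, y) \<in> R1" using xy' s1 by (auto simp: mem_shift_rel)
      then have "x < k" using s1 by auto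
      then show ?thesis using 2 by auto
    qed
  qed
  then show "(x, z) \<in> R1 \<union> shift_rel k R2 \<union> ?C" using mem_cross[of x z k m] by blast
qed

lemma concat_canon:
  "canonical_pp (pp_size P + pp_size Q,
      pp_h P \<union> shift_rel (pp_size P) (pp_h Q),
      pp_r P \<union> shift_rel (pp_size P) (pp_r Q) \<union>
        {(i, pp_size P + j) | i j. i < pp_size P \<and> j < pp_size Q})"
proof -
  let ?k = "pp_size P" and ?m = "pp_size Q"
  note A = canon_props[OF pp_canon[of P]] canon_refl[OF pp_canon[of P]]
    and B = canon_props[OF pp_canon[of Q]] canon_refl[OF pp_canon[of Q]]
  show ?thesis
  proof (rule canon_intro)
    show "pp_h P \<union> shift_rel ?k (pp_h Q) \<subseteq> {0..<?k + ?m} \<times> {0..<?k + ?m}"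
      using A(1) B(1) by (auto simp: mem_shift_rel)
    show "pp_r P \<union> shift_rel ?k (pp_r Q) \<union> {(i, ?k + j) | i j. i < ?k \<and> j < ?m} \<subseteq> {0..<?k + ?m} \<times> {0..<?k + ?m}"
      using A(2) B(2) by (auto simp: mem_shift_rel mem_cross)
    show "\<And>i. i < ?k + ?m \<Longrightarrow> (i, i) \<in> pp_h P \<union> shift_rel ?k (pp_h Q)"
    proof -
      fix i assume i: "i < ?k + ?m"
      show "(i, i) \<in> pp_h P \<union> shift_rel ?k (pp_h Q)"
      proof (cases "i < ?k")
        case True then show ?thesis using A(9) by auto
      next
        case False then have "i - ?k < ?m" using i by auto
        then show ?thesis using B(9) False by (auto simp: mem_shift_rel)
      qed
    qed
    show "\<And>i. i < ?k + ?m \<Longrightarrow> (i, i) \<in> pp_r P \<union> shift_rel ?k (pp_r Q) \<union> {(i, ?k + j) | i j. i < ?k \<and> j < ?m}"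
    proof -
      fix i assume i: "i < ?k + ?m"
      show "(i, i) \<in> pp_r P \<union> shift_rel ?k (pp_r Q) \<union> {(i, ?k + j) | i j. i < ?k \<and> j < ?m}"
      proof (cases "i < ?k")
        case True then show ?thesis using A(10) by auto
      next
        case False then have "i - ?k < ?m" using i by auto
        then show ?thesis using B(10) False by (auto simp: mem_shift_rel)
      qed
    qed
    show "\<And>i j. (i, j) \<in> pp_h P \<union> shift_rel ?k (pp_h Q) \<Longrightarrow> i \<le> j"
      using A(3) B(3) by (auto simp: mem_shift_rel) (metis le_diff_iff)
    show "\<And>i j. (i, j) \<in> pp_r P \<union> shift_rel ?k (pp_r Q) \<union> {(i, ?k + j) | i j. i < ?k \<and> j < ?m} \<Longrightarrow> i \<le> j"
      using A(4) B(4) by (auto simp: mem_shift_rel mem_cross) (metis le_diff_iff)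
    show "\<And>i j. i \<le> j \<Longrightarrow> j < ?k + ?m \<Longrightarrow> (i, j) \<in> pp_h P \<union> shift_rel ?k (pp_h Q) \<or>
       (i, j) \<in> pp_r P \<union> shift_rel ?k (pp_r Q) \<union> {(i, ?k + j) | i j. i < ?k \<and> j < ?m}"
    proof -
      fix i j assume ij: "i \<le> j" "j < ?k + ?m"
      show "?thesis i j"
      proof (cases "j < ?k")
        case True then show ?thesis using A(5)[OF ij(1)] by auto
      next
        case jk: False
        show ?thesis
        proof (cases "i < ?k")
          case True then show ?thesis using jk ij by (intro disjI2 UnI2, subst mem_cross) simp
        next
          case False
          then have "i - ?k \<le> j - ?k" "j - ?k < ?m" using ij jk by auto
          then show ?thesis using B(5)[of "i - ?k" "j - ?k"] False jk by (auto simp: mem_shift_rel)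
        qed
      qed
    qed
    show "\<And>i j. i \<noteq> j \<Longrightarrow> (i, j) \<in> pp_h P \<union> shift_rel ?k (pp_h Q) \<Longrightarrow>
       (i, j) \<notin> pp_r P \<union> shift_rel ?k (pp_r Q) \<union> {(i, ?k + j) | i j. i < ?k \<and> j < ?m}"
      using A(1,2,6) B(1,2,6) by (auto simp: mem_shift_rel mem_cross)
    show "trans (pp_h P \<union> shift_rel ?k (pp_h Q))"
      using A(1,7) B(1,7) by (rule trans_sum1)
    show "trans (pp_r P \<union> shift_rel ?k (pp_r Q) \<union> {(i, ?k + j) | i j. i < ?k \<and> j < ?m})"
      using A(2,8) B(2,8) by (rule trans_sum2)
  qed
qed

lemma canon_swap: "canonical_pp (n, h, r) \<Longrightarrow> canonical_pp (n, r, h)"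
  unfolding canonical_pp_def plane_poset_def by auto

definition iota :: "pp \<Rightarrow> pp" where "iota P = Abs_pp (pp_size P, pp_r P, pp_h P)"

lemma iota_fields: "pp_size (iota P) = pp_size P" "pp_h (iota P) = pp_r P" "pp_r (iota P) = pp_h P"
  using Abs_pp_fields[OF canon_swap[OF pp_canon[of P]]] by (simp_all add: iota_def)

lemma under_canon:
  "canonical_pp (pp_size P + pp_size Q,
      pp_h P \<union> shift_rel (pp_size P) (pp_h Q) \<union>
        {(i, pp_size P + j) | i j. i < pp_size P \<and> j < pp_size Q},
      pp_r P \<union> shift_rel (pp_size P) (pp_r Q))"
  using canon_swap[OF concat_canon[of "iota P" "iota Q"]] by (simp add: iota_fields)

abbreviation cross :: "nat \<Rightarrow> nat \<Rightarrow> nat rel" where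
  "cross k m \<equiv> {(i, k + j) | i j. i < k \<and> j < m}"

lemma concat_fields:
  "pp_size (pp_concat P Q) = pp_size P + pp_size Q"
  "pp_h (pp_concat P Q) = pp_h P \<union> shift_rel (pp_size P) (pp_h Q)"
  "pp_r (pp_concat P Q) = pp_r P \<union> shift_rel (pp_size P) (pp_r Q) \<union> cross (pp_size P) (pp_size Q)"
  using Abs_pp_fields[OF concat_canon[of P Q]] by (simp_all add: pp_concat_def)

lemma under_fields:
  "pp_size (pp_under P Q) = pp_size P + pp_size Q"
  "pp_h (pp_under P Q) = pp_h P \<union> shift_rel (pp_size P) (pp_h Q) \<union> cross (pp_size P) (pp_size Q)"
  "pp_r (pp_under P Q) = pp_r P \<union> shift_rel (pp_size P) (pp_r Q)"
  using Abs_pp_fields[OF under_canon[of P Q]] by (simp_all add: pp_under_def)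

definition restr_rel :: "nat \<Rightarrow> nat \<Rightarrow> nat rel \<Rightarrow> nat rel" where
  "restr_rel k m R = {(i, j). i < m \<and> j < m \<and> (i + k, j + k) \<in> R}"

definition restr :: "pp \<Rightarrow> nat \<Rightarrow> nat \<Rightarrow> pp" where
  "restr c k m = Abs_pp (m, restr_rel k m (pp_h c), restr_rel k m (pp_r c))"

lemma restr_canon:
  assumes "k + m \<le> pp_size c"
  shows "canonical_pp (m, restr_rel k m (pp_h c), restr_rel k m (pp_r c))"
proof -
  note A = canon_props[OF pp_canon[of c]] canon_refl[OF pp_canon[of c]]
  show ?thesis
  proof (rule canon_intro)
    show "\<And>i j. i \<le> j \<Longrightarrow> j < m \<Longrightarrow>
         (i, j) \<in> restr_rel k m (pp_h c) \<or> (i, j) \<in> restr_rel k m (pp_r c)"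
      using A(5) assms by (auto simp: restr_rel_def)
    show "\<And>i. i < m \<Longrightarrow> (i, i) \<in> restr_rel k m (pp_h c)"
      using A(9) assms by (auto simp: restr_rel_def)
    show "\<And>i. i < m \<Longrightarrow> (i, i) \<in> restr_rel k m (pp_r c)"
      using A(10) assms by (auto simp: restr_rel_def)
    show "trans (restr_rel k m (pp_h c))"
      using A(7) unfolding trans_def restr_rel_def by blast
    show "trans (restr_rel k m (pp_r c))"
      using A(8) unfolding trans_def restr_rel_def by blast
    show "\<And>i j. (i, j) \<in> restr_rel k m (pp_h c) \<Longrightarrow> i \<le> j"
      by (auto simp: restr_rel_def dest: A(3))
    show "\<And>i j. (i, j) \<in> restr_rel k m (pp_r c) \<Longrightarrow> i \<le> j"
      by (auto simp: restr_rel_def dest: A(4))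
  qed (use A in \<open>auto simp: restr_rel_def\<close>)
qed

lemma restr_fields:
  assumes "k + m \<le> pp_size c"
  shows "pp_size (restr c k m) = m" "pp_h (restr c k m) = restr_rel k m (pp_h c)"
    "pp_r (restr c k m) = restr_rel k m (pp_r c)"
  using Abs_pp_fields[OF restr_canon[OF assms]] by (simp_all add: restr_def)

lemma restr_concat1: "restr (pp_concat P Q) 0 (pp_size P) = P"
proof -
  note A = canon_props[OF pp_canon[of P]]
  have le: "0 + pp_size P \<le> pp_size (pp_concat P Q)" by (simp add: concat_fields)
  show ?thesis
  proof (rule pp_eqI)
    show "pp_size (restr (pp_concat P Q) 0 (pp_size P)) = pp_size P" using restr_fields[OF le] by simp
    show "pp_h (restr (pp_concat P Q) 0 (pp_size P)) = pp_h P"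
      using restr_fields[OF le] A(1) by (auto simp: concat_fields restr_rel_def mem_shift_rel)
    show "pp_r (restr (pp_concat P Q) 0 (pp_size P)) = pp_r P"
      using restr_fields[OF le] A(2) by (auto simp: concat_fields restr_rel_def mem_shift_rel)
  qed
qed

lemma restr_concat2: "restr (pp_concat P Q) (pp_size P) (pp_size Q) = Q"
proof -
  note A = canon_props[OF pp_canon[of P]] and B = canon_props[OF pp_canon[of Q]]
  have le: "pp_size P + pp_size Q \<le> pp_size (pp_concat P Q)" by (simp add: concat_fields)
  show ?thesis
  proof (rule pp_eqI)
    show "pp_size (restr (pp_concat P Q) (pp_size P) (pp_size Q)) = pp_size Q" using restr_fields[OF le] by simp
    show "pp_h (restr (pp_concat P Q) (pp_size P) (pp_size Q)) = pp_h Q"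
      using restr_fields[OF le] A(1) B(1) by (auto simp: concat_fields restr_rel_def mem_shift_rel)
    show "pp_r (restr (pp_concat P Q) (pp_size P) (pp_size Q)) = pp_r Q"
      using restr_fields[OF le] A(2) B(2) by (auto simp: concat_fields restr_rel_def mem_shift_rel)
  qed
qed

lemma concat_inj:
  assumes "pp_concat P Q = pp_concat P' Q'" "pp_size P = pp_size P'"
  shows "P = P'" "Q = Q'"
proof -
  have "pp_size (pp_concat P Q) = pp_size (pp_concat P' Q')" using assms(1) by simp
  then have "pp_size Q = pp_size Q'" using assms(2) by (simp add: concat_fields)
  then show "P = P'" "Q = Q'" using restr_concat1[of P Q] restr_concat1[of P' Q']
      restr_concat2[of P Q] restr_concat2[of P' Q'] assms by metis+
qed

lemma decompose:
  assumes sz: "pp_size c = k + m"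
    and nocross: "\<And>i j. i < k \<Longrightarrow> k \<le> j \<Longrightarrow> j < k + m \<Longrightarrow> (i, j) \<notin> pp_h c"
  shows "pp_concat (restr c 0 k) (restr c k m) = c"
proof -
  note A = canon_props[OF pp_canon[of c]]
  have le1: "0 + k \<le> pp_size c" and le2: "k + m \<le> pp_size c" using sz by auto
  note F1 = restr_fields[OF le1] and F2 = restr_fields[OF le2]
  show ?thesis
  proof (rule pp_eqI)
    show "pp_size (pp_concat (restr c 0 k) (restr c k m)) = pp_size c"
      by (simp add: concat_fields F1 F2 sz)
    show "pp_h (pp_concat (restr c 0 k) (restr c k m)) = pp_h c"
    proof (rule set_eqI, clarify)
      fix a b
      show "((a, b) \<in> pp_h (pp_concat (restr c 0 k) (restr c k m))) = ((a, b) \<in> pp_h c)"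
      proof
        assume "(a, b) \<in> pp_h (pp_concat (restr c 0 k) (restr c k m))"
        then show "(a, b) \<in> pp_h c"
          by (auto simp: concat_fields F1 F2 restr_rel_def mem_shift_rel)
      next
        assume ab: "(a, b) \<in> pp_h c"
        then have "a \<le> b" "b < k + m" using A(1,3) sz by auto
        then consider "b < k" | "k \<le> a" | "a < k \<and> k \<le> b" by linarith
        then show "(a, b) \<in> pp_h (pp_concat (restr c 0 k) (restr c k m))"
        proof cases
          case 1 then show ?thesis using ab \<open>a \<le> b\<close> by (auto simp: concat_fields F1 F2 restr_rel_def)
        next
          case 2 then show ?thesis using ab \<open>a \<le> b\<close> \<open>b < k + m\<close>
            by (auto simp: concat_fields F1 F2 restr_rel_def mem_shift_rel)
        next
          case 3 then show ?thesis using ab nocross \<open>b < k + m\<close> by blast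
        qed
      qed
    qed
    show "pp_r (pp_concat (restr c 0 k) (restr c k m)) = pp_r c"
    proof (rule set_eqI, clarify)
      fix a b
      show "((a, b) \<in> pp_r (pp_concat (restr c 0 k) (restr c k m))) = ((a, b) \<in> pp_r c)"
      proof
        assume ab: "(a, b) \<in> pp_r (pp_concat (restr c 0 k) (restr c k m))"
        have "(a, b) \<in> restr_rel 0 k (pp_r c) \<or> (a, b) \<in> shift_rel k (restr_rel k m (pp_r c))
           \<or> (a < k \<and> k \<le> b \<and> b < k + m)"
          using ab mem_cross[of a b k m] by (simp add: concat_fields F1 F2)
        then show "(a, b) \<in> pp_r c"
        proof (elim disjE)
          assume "a < k \<and> k \<le> b \<and> b < k + m"
          then show ?thesis using A(5)[of a b] nocross[of a b] sz by auto
        qed (auto simp: restr_rel_def mem_shift_rel)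
      next
        assume ab: "(a, b) \<in> pp_r c"
        then have "a \<le> b" "b < k + m" using A(2,4) sz by auto
        then consider "b < k" | "k \<le> a" | "a < k \<and> k \<le> b" by linarith
        then show "(a, b) \<in> pp_r (pp_concat (restr c 0 k) (restr c k m))"
        proof cases
          case 1 then show ?thesis using ab \<open>a \<le> b\<close> by (auto simp: concat_fields F1 F2 restr_rel_def)
        next
          case 2 then show ?thesis using ab \<open>a \<le> b\<close> \<open>b < k + m\<close>
            by (auto simp: concat_fields F1 F2 restr_rel_def mem_shift_rel)
        next
          case 3 then show ?thesis using mem_cross[of a b k m] \<open>b < k + m\<close>
            by (simp add: concat_fields F1 F2)
        qed
      qed
    qed
  qed
qed

definition cnt :: "nat rel \<Rightarrow> nat rel \<Rightarrow> nat" where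
  "cnt X Y = card {(x, y). x \<noteq> y \<and> (x, y) \<in> X \<and> (x, y) \<in> Y}"

lemma phi_cnt: "pp_phi P Q = cnt (pp_r P) (pp_h Q) + cnt (pp_h P) (pp_r Q)"
  by (simp add: pp_phi_def cnt_def)

lemma card_shift: "card (shift_rel k R) = card R"
  unfolding shift_rel_def by (rule card_image) (auto simp: inj_on_def)

lemma finite_shift: "finite R \<Longrightarrow> finite (shift_rel k R)"
  unfolding shift_rel_def by simp

lemma card_cross: "card (cross k m) = k * m"
proof -
  have "cross k m = (\<lambda>(i, j). (i, k + j)) ` ({..<k} \<times> {..<m})" by auto
  moreover have "inj_on (\<lambda>(i, j). (i, k + j)) ({..<k} \<times> {..<m})" by (auto simp: inj_on_def)
  ultimately show ?thesis by (simp add: card_image card_cartesian_product)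
qed

lemma finite_cross: "finite (cross k m)"
proof -
  have "cross k m = (\<lambda>(i, j). (i, k + j)) ` ({..<k} \<times> {..<m})" by auto
  then show ?thesis by simp
qed

lemma cnt_set1:
  assumes "X1 \<subseteq> {0..<k} \<times> {0..<k}" "Y1 \<subseteq> {0..<k} \<times> {0..<k}"
  shows "{(x, y). x \<noteq> y \<and> (x, y) \<in> X1 \<union> shift_rel k X2 \<and> (x, y) \<in> Y1 \<union> shift_rel k Y2}
    = {(x, y). x \<noteq> y \<and> (x, y) \<in> X1 \<and> (x, y) \<in> Y1} \<union>
      shift_rel k {(x, y). x \<noteq> y \<and> (x, y) \<in> X2 \<and> (x, y) \<in> Y2}"
  using assms by (auto simp: mem_shift_rel)

lemma cnt_sum1:
  assumes "X1 \<subseteq> {0..<k} \<times> {0..<k}" "Y1 \<subseteq> {0..<k} \<times> {0..<k}"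
    "X2 \<subseteq> {0..<m} \<times> {0..<m}"
  shows "cnt (X1 \<union> shift_rel k X2) (Y1 \<union> shift_rel k Y2) = cnt X1 Y1 + cnt X2 Y2"
proof -
  let ?D1 = "{(x, y). x \<noteq> y \<and> (x, y) \<in> X1 \<and> (x, y) \<in> Y1}"
  let ?D2 = "{(x, y). x \<noteq> y \<and> (x, y) \<in> X2 \<and> (x, y) \<in> Y2}"
  have f1: "finite ?D1" by (rule finite_subset[of _ "{0..<k} \<times> {0..<k}"]) (use assms in auto)
  have f2: "finite ?D2" by (rule finite_subset[of _ "{0..<m} \<times> {0..<m}"]) (use assms in auto)
  have disj: "?D1 \<inter> shift_rel k ?D2 = {}" using assms(1) by (auto simp: mem_shift_rel)
  show ?thesis unfolding cnt_def cnt_set1[OF assms(1,2)]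
    by (simp add: card_Un_disjoint[OF f1 finite_shift[OF f2] disj] card_shift)
qed

lemma cnt_sum2:
  assumes "X1 \<subseteq> {0..<k} \<times> {0..<k}" "Y1 \<subseteq> {0..<k} \<times> {0..<k}"
    "X2 \<subseteq> {0..<m} \<times> {0..<m}" "Y2 \<subseteq> {0..<m} \<times> {0..<m}"
  shows "cnt (X1 \<union> shift_rel k X2 \<union> cross k m) (Y1 \<union> shift_rel k Y2 \<union> cross k m)
     = cnt X1 Y1 + cnt X2 Y2 + k * m"
proof -
  let ?D1 = "{(x, y). x \<noteq> y \<and> (x, y) \<in> X1 \<and> (x, y) \<in> Y1}"
  let ?D2 = "{(x, y). x \<noteq> y \<and> (x, y) \<in> X2 \<and> (x, y) \<in> Y2}"
  have f1: "finite ?D1" by (rule finite_subset[of _ "{0..<k} \<times> {0..<k}"]) (use assms in auto)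
  have f2: "finite ?D2" by (rule finite_subset[of _ "{0..<m} \<times> {0..<m}"]) (use assms in auto)
  have disj: "?D1 \<inter> shift_rel k ?D2 = {}" using assms(1) by (auto simp: mem_shift_rel)
  define C where "C = cross k m"
  have Cm: "\<And>a b. (a, b) \<in> C \<longleftrightarrow> a < k \<and> k \<le> b \<and> b < k + m" unfolding C_def by (rule mem_cross)
  have eq: "{(x, y). x \<noteq> y \<and> (x, y) \<in> X1 \<union> shift_rel k X2 \<union> C \<and> (x, y) \<in> Y1 \<union> shift_rel k Y2 \<union> C}
     = (?D1 \<union> shift_rel k ?D2) \<union> C"
    using assms by (auto simp: mem_shift_rel Cm)
  have disj2: "(?D1 \<union> shift_rel k ?D2) \<inter> C = {}"
    using assms(1) by (auto simp: mem_shift_rel Cm)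
  have fC: "finite C" unfolding C_def by (rule finite_cross)
  have cC: "card C = k * m" unfolding C_def by (rule card_cross)
  show ?thesis unfolding cnt_def C_def[symmetric] eq
    by (simp add: card_Un_disjoint[OF _ fC disj2] f1 f2 finite_shift
        card_Un_disjoint[OF f1 finite_shift[OF f2] disj] card_shift cC)
qed

lemma iota_concat:
  assumes s1: "pp_size P1 = pp_size a" and s2: "pp_size P2 = pp_size b"
  shows "pp_leq_iota (pp_under a b) (pp_concat P1 P2) \<longleftrightarrow> pp_leq_iota a P1 \<and> pp_leq_iota b P2"
proof -
  let ?k = "pp_size a" and ?m = "pp_size b"
  note A = canon_props[OF pp_canon[of a]] and B = canon_props[OF pp_canon[of b]]
  note C = canon_props[OF pp_canon[of P1]] and D = canon_props[OF pp_canon[of P2]]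
  have L: "pp_leq_iota (pp_under a b) (pp_concat P1 P2) \<longleftrightarrow>
     (\<forall>x<?k + ?m. \<forall>y<?k + ?m. (x, y) \<in> pp_h P1 \<union> shift_rel ?k (pp_h P2) \<longrightarrow>
         (x, y) \<in> pp_r a \<union> shift_rel ?k (pp_r b))"
    unfolding pp_leq_iota_def by (simp add: under_fields concat_fields s1 s2)
  show ?thesis
  proof
    assume H: "pp_leq_iota (pp_under a b) (pp_concat P1 P2)"
    have "pp_leq_iota a P1" unfolding pp_leq_iota_def
    proof (intro conjI allI impI)
      fix x y assume xy: "x < pp_size a" "y < pp_size a" "(x, y) \<in> pp_h P1"
      then have "(x, y) \<in> pp_r a \<union> shift_rel ?k (pp_r b)" using H L by auto
      then show "(x, y) \<in> pp_r a" using xy by (auto simp: mem_shift_rel)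
    qed (use s1 in auto)
    moreover have "pp_leq_iota b P2" unfolding pp_leq_iota_def
    proof (intro conjI allI impI)
      fix x y assume xy: "x < pp_size b" "y < pp_size b" "(x, y) \<in> pp_h P2"
      then have "(x + ?k, y + ?k) \<in> shift_rel ?k (pp_h P2)" by (simp add: mem_shift_rel)
      then have "(x + ?k, y + ?k) \<in> pp_r a \<union> shift_rel ?k (pp_r b)" using H L xy by auto
      then show "(x, y) \<in> pp_r b" using A(2) by (auto simp: mem_shift_rel)
    qed (use s2 in auto)
    ultimately show "pp_leq_iota a P1 \<and> pp_leq_iota b P2" by simp
  next
    assume H: "pp_leq_iota a P1 \<and> pp_leq_iota b P2"
    show "pp_leq_iota (pp_under a b) (pp_concat P1 P2)" unfolding L
    proof (intro allI impI)
      fix x y assume xy: "x < ?k + ?m" "y < ?k + ?m" "(x, y) \<in> pp_h P1 \<union> shift_rel ?k (pp_h P2)"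
      from xy(3) show "(x, y) \<in> pp_r a \<union> shift_rel ?k (pp_r b)"
      proof
        assume "(x, y) \<in> pp_h P1"
        then show ?thesis using H C(1) s1 unfolding pp_leq_iota_def by auto
      next
        assume "(x, y) \<in> shift_rel ?k (pp_h P2)"
        then have "?k \<le> x" "?k \<le> y" "(x - ?k, y - ?k) \<in> pp_h P2" by (auto simp: mem_shift_rel)
        moreover have "x - ?k < ?m" "y - ?k < ?m" using xy(1,2) by (simp_all add: less_diff_conv2 \<open>?k \<le> x\<close> \<open>?k \<le> y\<close>)
        ultimately show ?thesis using H unfolding pp_leq_iota_def by (auto simp: mem_shift_rel)
      qed
    qed
  qed
qed

lemma phi_concat:
  assumes s1: "pp_size P1 = pp_size a" and s2: "pp_size P2 = pp_size b"
  shows "pp_phi (pp_under a b) (pp_concat P1 P2) = pp_phi a P1 + pp_phi b P2 + pp_size a * pp_size b"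
proof -
  note A = canon_props[OF pp_canon[of a]] and B = canon_props[OF pp_canon[of b]]
  note C = canon_props[OF pp_canon[of P1]] and D = canon_props[OF pp_canon[of P2]]
  have e1: "cnt (pp_r a \<union> shift_rel (pp_size a) (pp_r b)) (pp_h P1 \<union> shift_rel (pp_size a) (pp_h P2))
      = cnt (pp_r a) (pp_h P1) + cnt (pp_r b) (pp_h P2)"
    using A(2) C(1) B(2) s1 by (intro cnt_sum1) auto
  have e2: "cnt (pp_h a \<union> shift_rel (pp_size a) (pp_h b) \<union> cross (pp_size a) (pp_size b))
       (pp_r P1 \<union> shift_rel (pp_size a) (pp_r P2) \<union> cross (pp_size a) (pp_size b))
      = cnt (pp_h a) (pp_r P1) + cnt (pp_h b) (pp_r P2) + pp_size a * pp_size b"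
    using A(1) C(2) B(1) D(2) s1 s2 by (intro cnt_sum2) auto
  show ?thesis unfolding phi_cnt using e1 e2
    by (simp add: under_fields concat_fields s1 s2)
qed

lemma finite_size_le: "finite {P. pp_size P \<le> n}"
proof -
  let ?S = "{..n} \<times> Pow ({0..<n} \<times> {0..<n}) \<times> Pow ({0..<n} \<times> {0..<n})"
  have "Rep_pp ` {P. pp_size P \<le> n} \<subseteq> ?S"
  proof
    fix t assume "t \<in> Rep_pp ` {P. pp_size P \<le> n}"
    then obtain P where P: "t = Rep_pp P" "pp_size P \<le> n" by auto
    note A = canon_props[OF pp_canon[of P]]
    have "t = (pp_size P, pp_h P, pp_r P)" using P by (simp add: pp_size_def pp_h_def pp_r_def)
    then show "t \<in> ?S" using A(1,2) P(2) by fastforce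
  qed
  then have "finite (Rep_pp ` {P. pp_size P \<le> n})" by (rule finite_subset) simp
  then show ?thesis by (rule finite_imageD) (simp add: inj_on_def Rep_pp_inject)
qed

lemma finite_fiber: "finite {(P1, P2). pp_concat P1 P2 = c}"
proof -
  have "{(P1, P2). pp_concat P1 P2 = c} \<subseteq> {P. pp_size P \<le> pp_size c} \<times> {P. pp_size P \<le> pp_size c}"
    by (auto simp: concat_fields)
  then show ?thesis by (rule finite_subset) (simp add: finite_size_le)
qed

lemma pair_nz_size: "pp_pair q a P \<noteq> 0 \<Longrightarrow> pp_size a = pp_size P"
  by (auto simp: pp_pair_def pp_leq_iota_def split: if_splits)

lemma basis:
  "pp_pair q (pp_under a b) c = (\<Sum>p\<in>{(P1, P2). pp_concat P1 P2 = c}.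
      q ^ (pp_size (fst p) * pp_size (snd p)) * pp_pair q a (fst p) * pp_pair q b (snd p))"
proof -
  let ?S = "{(P1, P2). pp_concat P1 P2 = c}"
  let ?f = "\<lambda>p. q ^ (pp_size (fst p) * pp_size (snd p)) * pp_pair q a (fst p) * pp_pair q b (snd p)"
  have nz: "\<And>p. ?f p \<noteq> 0 \<Longrightarrow> pp_size (fst p) = pp_size a \<and> pp_size (snd p) = pp_size b"
    using pair_nz_size by (metis mult_zero_left mult_zero_right)
  show ?thesis
  proof (cases "\<exists>P1 P2. pp_concat P1 P2 = c \<and> pp_size P1 = pp_size a \<and> pp_size P2 = pp_size b")
    case True
    then obtain P1 P2 where P: "pp_concat P1 P2 = c" "pp_size P1 = pp_size a" "pp_size P2 = pp_size b" by blast
    have "sum ?f ?S = sum ?f {(P1, P2)}"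
    proof (rule sum.mono_neutral_right)
      show "finite ?S" by (rule finite_fiber)
      show "{(P1, P2)} \<subseteq> ?S" using P by auto
      show "\<forall>p\<in>?S - {(P1, P2)}. ?f p = 0"
      proof
        fix p assume p: "p \<in> ?S - {(P1, P2)}"
        show "?f p = 0"
        proof (rule ccontr)
          assume "?f p \<noteq> 0"
          then have "pp_size (fst p) = pp_size P1" using nz P by auto
          moreover have "pp_concat (fst p) (snd p) = pp_concat P1 P2" using p P by auto
          ultimately have "fst p = P1" "snd p = P2" using concat_inj by blast+
          then show False using p by auto
        qed
      qed
    qed
    also have "\<dots> = ?f (P1, P2)" by simp
    also have "\<dots> = pp_pair q (pp_under a b) c"
      unfolding P(1)[symmetric] pp_pair_def iota_concat[OF P(2,3)] phi_concat[OF P(2,3)]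
      by (simp add: P power_add)
    finally show ?thesis by simp
  next
    case False
    have "sum ?f ?S = 0"
    proof (rule sum.neutral, rule ballI)
      fix p assume "p \<in> ?S"
      then show "?f p = 0" using nz False by (cases p) fastforce
    qed
    moreover have "\<not> pp_leq_iota (pp_under a b) c"
    proof
      assume H: "pp_leq_iota (pp_under a b) c"
      let ?k = "pp_size a" and ?m = "pp_size b"
      note A = canon_props[OF pp_canon[of a]] and B = canon_props[OF pp_canon[of b]]
      have sz: "pp_size c = ?k + ?m" using H by (simp add: pp_leq_iota_def under_fields)
      have nc: "\<And>i j. i < ?k \<Longrightarrow> ?k \<le> j \<Longrightarrow> j < ?k + ?m \<Longrightarrow> (i, j) \<notin> pp_h c"
      proof
        fix i j assume ij: "i < ?k" "?k \<le> j" "j < ?k + ?m" "(i, j) \<in> pp_h c"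
        then have "(i, j) \<in> pp_r a \<union> shift_rel ?k (pp_r b)"
          using H by (auto simp: pp_leq_iota_def under_fields)
        then show False using ij A(2) by (auto simp: mem_shift_rel)
      qed
      have le1: "0 + ?k \<le> pp_size c" and le2: "?k + ?m \<le> pp_size c" using sz by auto
      show False using False decompose[OF sz nc] restr_fields(1)[OF le1] restr_fields(1)[OF le2] by blast
    qed
    ultimately show ?thesis by (simp add: pp_pair_def)
  qed
qed

lemma pairing_superset:
  assumes "finite A" "Poly_Mapping.keys x \<subseteq> A" "finite C" "Poly_Mapping.keys z \<subseteq> C"
  shows "pairing q x z = (\<Sum>a\<in>A. \<Sum>c\<in>C. Poly_Mapping.lookup x a * Poly_Mapping.lookup z c * pp_pair q a c)"
proof -
  have "pairing q x z = (\<Sum>a\<in>A. \<Sum>c\<in>Poly_Mapping.keys z. Poly_Mapping.lookup x a * Poly_Mapping.lookup z c * pp_pair q a c)"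
    unfolding pairing_def using assms by (intro sum.mono_neutral_left) (auto simp: in_keys_iff)
  also have "\<dots> = (\<Sum>a\<in>A. \<Sum>c\<in>C. Poly_Mapping.lookup x a * Poly_Mapping.lookup z c * pp_pair q a c)"
    using assms by (intro sum.cong refl sum.mono_neutral_left) (auto simp: in_keys_iff)
  finally show ?thesis .
qed

lemma pairing2_superset:
  assumes "finite A" "Poly_Mapping.keys T \<subseteq> A" "finite C" "Poly_Mapping.keys U \<subseteq> C"
  shows "pairing2 q T U = (\<Sum>ab\<in>A. \<Sum>cd\<in>C. Poly_Mapping.lookup T ab * Poly_Mapping.lookup U cd *
      pp_pair q (fst ab) (fst cd) * pp_pair q (snd ab) (snd cd))"
proof -
  have "pairing2 q T U = (\<Sum>ab\<in>A. \<Sum>cd\<in>Poly_Mapping.keys U. Poly_Mapping.lookup T ab * Poly_Mapping.lookup U cd *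
      pp_pair q (fst ab) (fst cd) * pp_pair q (snd ab) (snd cd))"
    unfolding pairing2_def using assms by (intro sum.mono_neutral_left) (auto simp: in_keys_iff)
  also have "\<dots> = (\<Sum>ab\<in>A. \<Sum>cd\<in>C. Poly_Mapping.lookup T ab * Poly_Mapping.lookup U cd *
      pp_pair q (fst ab) (fst cd) * pp_pair q (snd ab) (snd cd))"
    using assms by (intro sum.cong refl sum.mono_neutral_left) (auto simp: in_keys_iff)
  finally show ?thesis .
qed

lemma lookup_under:
  "Poly_Mapping.lookup (under x y) d = (\<Sum>a\<in>Poly_Mapping.keys x. \<Sum>b\<in>Poly_Mapping.keys y.
     (if pp_under a b = d then Poly_Mapping.lookup x a * Poly_Mapping.lookup y b else 0))"
  by (simp add: under_def lookup_sum lookup_single when_def)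

lemma lookup_tensor:
  "Poly_Mapping.lookup (tensor x y) (a, b) = Poly_Mapping.lookup x a * Poly_Mapping.lookup y b"
proof -
  have "Poly_Mapping.lookup (tensor x y) (a, b) = (\<Sum>a'\<in>Poly_Mapping.keys x. \<Sum>b'\<in>Poly_Mapping.keys y.
     (if a' = a \<and> b' = b then Poly_Mapping.lookup x a' * Poly_Mapping.lookup y b' else 0))"
    by (simp add: tensor_def lookup_sum lookup_single when_def)
  also have "\<dots> = (\<Sum>a'\<in>Poly_Mapping.keys x. if a' = a then (\<Sum>b'\<in>Poly_Mapping.keys y.
     (if b' = b then Poly_Mapping.lookup x a' * Poly_Mapping.lookup y b' else 0)) else 0)"
    by (intro sum.cong refl) auto
  also have "\<dots> = Poly_Mapping.lookup x a * Poly_Mapping.lookup y b"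
    by (simp add: in_keys_iff)
  finally show ?thesis .
qed

lemma lookup_coprod:
  "Poly_Mapping.lookup (coprod q z) (P1, P2) = Poly_Mapping.lookup z (pp_concat P1 P2) * q ^ (pp_size P1 * pp_size P2)"
proof -
  have "Poly_Mapping.lookup (coprod q z) (P1, P2) = (\<Sum>c\<in>Poly_Mapping.keys z. \<Sum>p\<in>{(P1, P2). pp_concat P1 P2 = c}.
     (if p = (P1, P2) then Poly_Mapping.lookup z c * q ^ (pp_size (fst p) * pp_size (snd p)) else 0))"
    by (simp add: coprod_def lookup_sum lookup_single when_def eq_commute)
  also have "\<dots> = (\<Sum>c\<in>Poly_Mapping.keys z. if pp_concat P1 P2 = c then Poly_Mapping.lookup z c * q ^ (pp_size P1 * pp_size P2) else 0)"
    by (intro sum.cong refl) (simp add: finite_fiber)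
  also have "\<dots> = Poly_Mapping.lookup z (pp_concat P1 P2) * q ^ (pp_size P1 * pp_size P2)"
    by (simp add: in_keys_iff)
  finally show ?thesis .
qed

lemma sum_prod_split: "(\<Sum>ab\<in>A \<times> B. f ab) = (\<Sum>a\<in>A. \<Sum>b\<in>B. f (a, b))"
  by (simp add: sum.cartesian_product)

theorem proposition24:
  fixes q :: "'k::field" and x y z :: "'k hpp"
  shows "pairing q (under x y) z = pairing2 q (tensor x y) (coprod q z)"
proof -
  let ?X = "Poly_Mapping.keys x" and ?Y = "Poly_Mapping.keys y" and ?Z = "Poly_Mapping.keys z"
  let ?lx = "Poly_Mapping.lookup x" and ?ly = "Poly_Mapping.lookup y" and ?lz = "Poly_Mapping.lookup z"
  define G where "G d = (\<Sum>c\<in>?Z. ?lz c * pp_pair q d c)" for d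
  define S where "S c = {(P1, P2). pp_concat P1 P2 = c}" for c
  define D where "D = Poly_Mapping.keys (under x y) \<union> (\<lambda>(a, b). pp_under a b) ` (?X \<times> ?Y)"
  have fD: "finite D" unfolding D_def by simp
  have LHS: "pairing q (under x y) z = (\<Sum>a\<in>?X. \<Sum>b\<in>?Y. ?lx a * ?ly b * G (pp_under a b))"
  proof -
    have "pairing q (under x y) z = (\<Sum>d\<in>D. \<Sum>c\<in>?Z. Poly_Mapping.lookup (under x y) d * ?lz c * pp_pair q d c)"
      by (rule pairing_superset) (auto simp: fD D_def)
    also have "\<dots> = (\<Sum>d\<in>D. Poly_Mapping.lookup (under x y) d * G d)"
      by (simp add: G_def sum_distrib_left mult.assoc)
    also have "\<dots> = (\<Sum>d\<in>D. \<Sum>a\<in>?X. \<Sum>b\<in>?Y. (if pp_under a b = d then ?lx a * ?ly b * G d else 0))"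
      by (simp add: lookup_under sum_distrib_right) (intro sum.cong refl; simp)
    also have "\<dots> = (\<Sum>a\<in>?X. \<Sum>b\<in>?Y. \<Sum>d\<in>D. (if pp_under a b = d then ?lx a * ?ly b * G d else 0))"
      by (subst sum.swap, rule sum.cong, rule refl, rule sum.swap)
    also have "\<dots> = (\<Sum>a\<in>?X. \<Sum>b\<in>?Y. ?lx a * ?ly b * G (pp_under a b))"
      by (intro sum.cong refl) (auto simp: fD D_def)
    finally show ?thesis .
  qed
  define K where "K = (\<Union>c\<in>?Z. S c)"
  have fS: "\<And>c. finite (S c)" unfolding S_def by (rule finite_fiber)
  have fK: "finite K" unfolding K_def using fS by simp
  have RHS: "pairing2 q (tensor x y) (coprod q z) = (\<Sum>a\<in>?X. \<Sum>b\<in>?Y. ?lx a * ?ly b *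
       (\<Sum>p\<in>K. ?lz (pp_concat (fst p) (snd p)) * q ^ (pp_size (fst p) * pp_size (snd p)) *
          pp_pair q a (fst p) * pp_pair q b (snd p)))"
  proof -
    have kt: "Poly_Mapping.keys (tensor x y) \<subseteq> ?X \<times> ?Y"
    proof
      fix ab assume "ab \<in> Poly_Mapping.keys (tensor x y)"
      then show "ab \<in> ?X \<times> ?Y" by (cases ab) (auto simp: in_keys_iff lookup_tensor)
    qed
    have kc: "Poly_Mapping.keys (coprod q z) \<subseteq> K"
    proof
      fix p assume "p \<in> Poly_Mapping.keys (coprod q z)"
      then show "p \<in> K" by (cases p) (auto simp: in_keys_iff lookup_coprod K_def S_def)
    qed
    have "pairing2 q (tensor x y) (coprod q z) = (\<Sum>ab\<in>?X \<times> ?Y. \<Sum>p\<in>K.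
        Poly_Mapping.lookup (tensor x y) ab * Poly_Mapping.lookup (coprod q z) p *
        pp_pair q (fst ab) (fst p) * pp_pair q (snd ab) (snd p))"
      by (rule pairing2_superset) (use kt kc fK in auto)
    also have "\<dots> = (\<Sum>a\<in>?X. \<Sum>b\<in>?Y. \<Sum>p\<in>K.
        Poly_Mapping.lookup (tensor x y) (a, b) * Poly_Mapping.lookup (coprod q z) p *
        pp_pair q a (fst p) * pp_pair q b (snd p))"
      by (simp only: sum_prod_split fst_conv snd_conv)
    also have "\<dots> = (\<Sum>a\<in>?X. \<Sum>b\<in>?Y. ?lx a * ?ly b *
       (\<Sum>p\<in>K. ?lz (pp_concat (fst p) (snd p)) * q ^ (pp_size (fst p) * pp_size (snd p)) *
          pp_pair q a (fst p) * pp_pair q b (snd p)))"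
      by (intro sum.cong refl) (auto simp: sum_distrib_left lookup_tensor lookup_coprod mult.assoc
          intro!: sum.cong split: prod.splits)
    finally show ?thesis .
  qed
  have key: "\<And>a b. (\<Sum>p\<in>K. ?lz (pp_concat (fst p) (snd p)) * q ^ (pp_size (fst p) * pp_size (snd p)) *
          pp_pair q a (fst p) * pp_pair q b (snd p)) = G (pp_under a b)"
  proof -
    fix a b
    have disj: "\<forall>c\<in>?Z. \<forall>c'\<in>?Z. c \<noteq> c' \<longrightarrow> S c \<inter> S c' = {}" by (auto simp: S_def)
    have "(\<Sum>p\<in>K. ?lz (pp_concat (fst p) (snd p)) * q ^ (pp_size (fst p) * pp_size (snd p)) *
          pp_pair q a (fst p) * pp_pair q b (snd p))
        = (\<Sum>c\<in>?Z. \<Sum>p\<in>S c. ?lz (pp_concat (fst p) (snd p)) * q ^ (pp_size (fst p) * pp_size (snd p)) *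
          pp_pair q a (fst p) * pp_pair q b (snd p))"
      unfolding K_def by (rule sum.UNION_disjoint) (use fS disj in auto)
    also have "\<dots> = (\<Sum>c\<in>?Z. ?lz c * (\<Sum>p\<in>S c. q ^ (pp_size (fst p) * pp_size (snd p)) *
          pp_pair q a (fst p) * pp_pair q b (snd p)))"
      by (intro sum.cong refl) (auto simp: S_def sum_distrib_left mult.assoc intro!: sum.cong)
    also have "\<dots> = G (pp_under a b)"
      unfolding G_def S_def by (simp add: basis)
    finally show "?thesis a b" .
  qed
  show ?thesis unfolding LHS RHS key ..
qed

end
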